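(* For any metric space $(X,d)$, any $p\ge1$, and any $\mu\in\mathcal{P}_{p-1}(X)$, the set $M_p(\mu)\subseteq X$ is closed and bounded.
   Context: $\mathcal{P}_{p-1}(X)$ is the set of Borel probability measures $\mu$ on $(X,d)$ with $\int_X d^{p-1}(x,y)\,d\mu(y)<\infty$ for some (equivalently all) $x\in X$. For such $\mu$, $W_p(\mu,x,x'):=\int_X(d^p(x,y)-d^p(x',y))\,d\mu(y)$ and $M_p(\mu):=\{x\in X: W_p(\mu,x,x')\le0\text{ for all }x'\in X\}$. *)

theory Defs
  imports "HOL-Probability.Probability"
begin

text \<open>The metric space (X,d) is modelled by a type of class metric_space, with d = dist.
  Borel probability measures are measures M with prob_space M and sets M = sets borel.\<close>

definition P_pm1 :: "real \<Rightarrow> ('a::metric_space) measure set" where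
  "P_pm1 p = {M. prob_space M \<and> sets M = sets borel \<and>
      (\<exists>x. integrable M (\<lambda>y. dist x y powr (p - 1)))}"

definition W_p :: "real \<Rightarrow> ('a::metric_space) measure \<Rightarrow> 'a \<Rightarrow> 'a \<Rightarrow> real" where
  "W_p p M x x' = (\<integral>y. (dist x y powr p - dist x' y powr p) \<partial>M)"

definition M_p :: "real \<Rightarrow> ('a::metric_space) measure \<Rightarrow> 'a set" where
  "M_p p M = {x. \<forall>x'. W_p p M x x' \<le> 0}"

end

theory Submission
  imports Defs
begin

lemma tangent_powr:
  fixes a b p :: real
  assumes "0 \<le> a" "0 \<le> b" "1 \<le> p"
  shows "p * b powr (p - 1) * (a - b) \<le> a powr p - b powr p"
proof (cases "b = 0")
  case True then show ?thesis using assms by simp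
next
  case False
  then have b: "b > 0" using assms by simp
  show ?thesis
  proof (cases "a = 0")
    case True
    have "p * b powr (p - 1) * (0 - b) = - p * (b powr (p-1) * b powr 1)" using b by simp
    also have "\<dots> = - p * (b powr p)" using powr_add[of b "p-1" 1] by simp
    also have "\<dots> \<le> - (b powr p)" using assms mult_right_mono[of 1 p "b powr p"] by simp
    finally show ?thesis using True assms by simp
  next
    case False
    then have a: "a > 0" using assms by simp
    have "p * b powr (p - 1) * (a - b) \<le> a powr p - b powr p"
      using b a by (intro convex_on_imp_above_tangent[where A = "{0<..}"] powr_convex assms)
        (auto intro!: derivative_eq_intros simp: interior_open)
    then show ?thesis .
  qed
qed

lemma powr_diff_bound:
  fixes a b p :: real
  assumes "0 \<le> a" "0 \<le> b" "1 \<le> p"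
  shows "\<bar>a powr p - b powr p\<bar> \<le> p * \<bar>a - b\<bar> * (a powr (p - 1) + b powr (p - 1))"
proof -
  have 1: "p * b powr (p - 1) * (a - b) \<le> a powr p - b powr p" by (rule tangent_powr[OF assms])
  have 2: "p * a powr (p - 1) * (b - a) \<le> b powr p - a powr p" by (rule tangent_powr[OF assms(2,1,3)])
  have pa: "0 \<le> p * a powr (p-1)" "0 \<le> p * b powr (p-1)" using assms by auto
  show ?thesis
  proof (cases "a \<le> b")
    case True
    then have "\<bar>a powr p - b powr p\<bar> = b powr p - a powr p" using assms by (simp add: powr_mono2)
    also have "\<dots> \<le> p * b powr (p-1) * (b - a)" using 1 by (simp add: algebra_simps)
    also have "\<dots> \<le> (p * b powr (p-1) + p * a powr (p-1)) * (b - a)"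
      using True pa by (intro mult_right_mono) auto
    also have "\<dots> = p * \<bar>a - b\<bar> * (a powr (p - 1) + b powr (p - 1))"
      using True by (simp add: algebra_simps)
    finally show ?thesis .
  next
    case False
    then have "\<bar>a powr p - b powr p\<bar> = a powr p - b powr p" using assms by (simp add: powr_mono2)
    also have "\<dots> \<le> p * a powr (p-1) * (a - b)" using 2 by (simp add: algebra_simps)
    also have "\<dots> \<le> (p * a powr (p-1) + p * b powr (p-1)) * (a - b)"
      using False pa by (intro mult_right_mono) auto
    also have "\<dots> = p * \<bar>a - b\<bar> * (a powr (p - 1) + b powr (p - 1))"
      using False by (simp add: algebra_simps)
    finally show ?thesis .
  qed
qed

lemma powr_sum_bound:
  fixes u v q :: real
  assumes "0 \<le> u" "0 \<le> v" "0 \<le> q"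
  shows "(u + v) powr q \<le> 2 powr q * (u powr q + v powr q)"
proof -
  have "(u + v) powr q \<le> (2 * max u v) powr q" using assms by (intro powr_mono2) auto
  also have "\<dots> = 2 powr q * max u v powr q" using assms by (simp add: powr_mult)
  also have "max u v powr q \<le> u powr q + v powr q" by (simp add: max_def)
  then have "2 powr q * max u v powr q \<le> 2 powr q * (u powr q + v powr q)" by simp
  finally show ?thesis .
qed


theorem corollary3p7:
  fixes M :: "('a::metric_space) measure" and p :: real
  assumes "p \<ge> 1" and "M \<in> P_pm1 p"
  shows "closed (M_p p M) \<and> bounded (M_p p M)"
proof -
  define q where "q = p - 1"
  have q0: "0 \<le> q" using assms(1) by (simp add: q_def)
  have p0: "0 \<le> p" using assms(1) by simp
  from assms(2) obtain x1 where P: "prob_space M" and sM: "sets M = sets borel"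
    and i1: "integrable M (\<lambda>y. dist x1 y powr q)"
    unfolding P_pm1_def q_def by auto
  interpret prob_space M by (rule P)
  have meas: "f \<in> borel_measurable M" if "continuous_on UNIV f" for f :: "'a \<Rightarrow> real"
    using borel_measurable_continuous_onI[OF that] measurable_cong_sets[OF sM refl, of borel] by (metis)
  have mdq: "(\<lambda>y. dist x y powr r) \<in> borel_measurable M" for x and r :: real
  proof -
    have "(\<lambda>y. dist x y) \<in> borel_measurable M" by (intro meas continuous_intros)
    then show ?thesis by (intro powr_real_measurable) auto
  qed
  have iq: "integrable M (\<lambda>y. dist x y powr q)" for x
  proof (rule Bochner_Integration.integrable_bound)
    show "integrable M (\<lambda>y. 2 powr q * (dist x x1 powr q + dist x1 y powr q))"
      using i1 by (intro integrable_mult_right integrable_add) auto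
    show "(\<lambda>y. dist x y powr q) \<in> borel_measurable M" by (rule mdq)
    show "AE y in M. norm (dist x y powr q) \<le> norm (2 powr q * (dist x x1 powr q + dist x1 y powr q))"
    proof (intro AE_I2)
      fix y
      have "dist x y powr q \<le> (dist x x1 + dist x1 y) powr q"
        using q0 by (intro powr_mono2) (auto intro: dist_triangle)
      also have "\<dots> \<le> 2 powr q * (dist x x1 powr q + dist x1 y powr q)"
        using q0 by (intro powr_sum_bound) auto
      finally show "norm (dist x y powr q) \<le> norm (2 powr q * (dist x x1 powr q + dist x1 y powr q))"
        by simp
    qed
  qed
  have ptw: "\<bar>dist x y powr p - dist x' y powr p\<bar> \<le> p * dist x x' * (dist x y powr q + dist x' y powr q)"
    for x x' y
  proof -
    have "\<bar>dist x y powr p - dist x' y powr p\<bar> \<le> p * \<bar>dist x y - dist x' y\<bar> * (dist x y powr q + dist x' y powr q)"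
      unfolding q_def using assms(1) by (intro powr_diff_bound) auto
    also have "\<dots> \<le> p * dist x x' * (dist x y powr q + dist x' y powr q)"
      using p0 abs_dist_diff_le[of x y x'] by (intro mult_right_mono mult_left_mono) (auto simp: dist_commute)
    finally show ?thesis .
  qed
  have idf: "integrable M (\<lambda>y. dist x y powr p - dist x' y powr p)" for x x'
  proof (rule Bochner_Integration.integrable_bound)
    show "integrable M (\<lambda>y. p * dist x x' * (dist x y powr q + dist x' y powr q))"
      using iq by (intro integrable_mult_right integrable_add) auto
    show "(\<lambda>y. dist x y powr p - dist x' y powr p) \<in> borel_measurable M"
      using mdq by (intro borel_measurable_diff) auto
    show "AE y in M. norm (dist x y powr p - dist x' y powr p) \<le> norm (p * dist x x' * (dist x y powr q + dist x' y powr q))"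
    proof (intro AE_I2)
      fix y
      have "0 \<le> p * dist x x' * (dist x y powr q + dist x' y powr q)" using p0 by auto
      then show "norm (dist x y powr p - dist x' y powr p) \<le> norm (p * dist x x' * (dist x y powr q + dist x' y powr q))"
        using ptw[of x y x'] by simp
    qed
  qed
  define G where "G x = W_p p M x x1" for x
  have Wsplit: "W_p p M x x' = G x - G x'" for x x'
  proof -
    have "G x - G x' = (\<integral>y. (dist x y powr p - dist x1 y powr p) - (dist x' y powr p - dist x1 y powr p) \<partial>M)"
      unfolding G_def W_p_def by (rule Bochner_Integration.integral_diff[symmetric]) (rule idf)+
    also have "\<dots> = W_p p M x x'" unfolding W_p_def by simp
    finally show ?thesis by simp
  qed
  have cont: "continuous_on UNIV G"
  proof (intro continuous_at_imp_continuous_on ballI)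
    fix x :: 'a
    define K where "K y = p * (2 powr q * (1 + dist x y powr q) + dist x y powr q)" for y
    have iK: "integrable M K" unfolding K_def using iq
      by (intro integrable_mult_right integrable_add) auto
    define C where "C = integral\<^sup>L M K"
    have K0: "0 \<le> K y" for y unfolding K_def using p0 by auto
    have C0: "0 \<le> C" unfolding C_def using K0 by (intro integral_nonneg_AE) auto
    have bnd: "\<bar>G z - G x\<bar> \<le> dist z x * C" if "dist z x \<le> 1" for z
    proof -
      have pk: "\<bar>dist z y powr p - dist x y powr p\<bar> \<le> dist z x * K y" for y
      proof -
        have "dist z y powr q \<le> (dist z x + dist x y) powr q"
          using q0 by (intro powr_mono2) (auto intro: dist_triangle)
        also have "\<dots> \<le> 2 powr q * (dist z x powr q + dist x y powr q)"
          using q0 by (intro powr_sum_bound) auto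
        also have "\<dots> \<le> 2 powr q * (1 + dist x y powr q)"
          using q0 that powr_le1[of q "dist z x"] by (intro mult_left_mono) auto
        finally have "dist z y powr q \<le> 2 powr q * (1 + dist x y powr q)" .
        then have "p * dist z x * (dist z y powr q + dist x y powr q) \<le> p * dist z x * (2 powr q * (1 + dist x y powr q) + dist x y powr q)"
          using p0 by (intro mult_left_mono) auto
        then show ?thesis using ptw[of z y x] unfolding K_def by (simp add: algebra_simps)
      qed
      have "G z - G x = (\<integral>y. (dist z y powr p - dist x y powr p) \<partial>M)"
        using Wsplit[of z x] unfolding W_p_def by simp
      moreover have "(\<integral>y. (dist z y powr p - dist x y powr p) \<partial>M) \<le> (\<integral>y. dist z x * K y \<partial>M)"
        using pk idf iK by (intro integral_mono) (auto simp: abs_le_iff)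
      moreover have "(\<integral>y. - (dist z x * K y) \<partial>M) \<le> (\<integral>y. (dist z y powr p - dist x y powr p) \<partial>M)"
      proof (intro integral_mono)
        fix y show "- (dist z x * K y) \<le> dist z y powr p - dist x y powr p"
          using pk[of y] by (simp add: abs_le_iff)
      qed (use idf iK in auto)
      ultimately show ?thesis unfolding C_def by (simp add: abs_le_iff)
    qed
    show "isCont G x"
      unfolding continuous_at_eps_delta
    proof (intro allI impI)
      fix e :: real assume e: "0 < e"
      show "\<exists>d>0. \<forall>z. dist z x < d \<longrightarrow> dist (G z) (G x) < e"
      proof (intro exI[of _ "min 1 (e / (C + 1))"] conjI allI impI)
        show "0 < min 1 (e / (C + 1))" using e C0 by simp
        fix z assume z: "dist z x < min 1 (e / (C + 1))"
        have "dist (G z) (G x) \<le> dist z x * C" using bnd[of z] z by (simp add: dist_real_def)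
        also have "\<dots> \<le> dist z x * (C + 1)" using C0 by (simp add: mult_left_mono)
        also have "\<dots> < e / (C + 1) * (C + 1)" using z C0
          by (intro mult_strict_right_mono) auto
        also have "\<dots> = e" using C0 by simp
        finally show "dist (G z) (G x) < e" .
      qed
    qed
  qed
  have Meq: "M_p p M = (\<Inter>x'. {x. G x \<le> G x'})"
    unfolding M_p_def Wsplit by auto
  have cl: "closed (M_p p M)" unfolding Meq
    by (intro closed_INT ballI closed_Collect_le cont continuous_on_const)
  define f where "f n y = (p * dist x1 y powr q + 1) * indicator {y. real n < dist x1 y} y" for n :: nat and y
  have ifn: "integrable M (f n)" for n
  proof (rule Bochner_Integration.integrable_bound)
    show "integrable M (\<lambda>y. p * dist x1 y powr q + 1)" using iq by auto
    have "{y. real n < dist x1 y} \<in> sets M" unfolding sM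
      by (intro borel_open open_Collect_less continuous_intros)
    then show "f n \<in> borel_measurable M" unfolding f_def using mdq
      by (intro borel_measurable_times borel_measurable_indicator borel_measurable_add
          borel_measurable_const) auto
    show "AE y in M. norm (f n y) \<le> norm (p * dist x1 y powr q + 1)"
      unfolding f_def using p0 by (intro AE_I2) (auto simp: indicator_def)
  qed
  have lim: "(\<lambda>n. integral\<^sup>L M (f n)) \<longlonglongrightarrow> integral\<^sup>L M (\<lambda>y. 0::real)"
  proof (rule integral_dominated_convergence[where w = "\<lambda>y. p * dist x1 y powr q + 1"])
    show "(\<lambda>y. 0::real) \<in> borel_measurable M" by simp
    show "f n \<in> borel_measurable M" for n using ifn by auto
    show "integrable M (\<lambda>y. p * dist x1 y powr q + 1)" using iq by auto
    show "AE y in M. (\<lambda>n. f n y) \<longlonglongrightarrow> 0"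
    proof (intro AE_I2 tendsto_eventually)
      fix y
      show "\<forall>\<^sub>F n in sequentially. f n y = 0"
        unfolding eventually_sequentially f_def
      proof (intro exI[of _ "nat (ceiling (dist x1 y))"] allI impI)
        fix n assume "nat (ceiling (dist x1 y)) \<le> n"
        then have "dist x1 y \<le> real n" using real_nat_ceiling_ge[of "dist x1 y"]
          by (meson of_nat_le_iff order_trans)
        then show "(p * dist x1 y powr q + 1) * indicator {y. real n < dist x1 y} y = 0"
          by (simp add: indicator_def)
      qed
    qed
    show "AE y in M. norm (f n y) \<le> p * dist x1 y powr q + 1" for n
      unfolding f_def using p0 by (intro AE_I2) (auto simp: indicator_def)
  qed
  then have "\<forall>\<^sub>F n in sequentially. integral\<^sup>L M (f n) < 1/4"
    by (intro order_tendstoD(2)) auto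
  then obtain n where fn: "integral\<^sup>L M (f n) < 1/4"
    unfolding eventually_sequentially by auto
  define r where "r = real n"
  define c where "c = r + r powr p"
  have r0: "0 \<le> r" and c0: "0 \<le> c" unfolding c_def r_def by auto
  define B where "B = max (r + 1) (2 * c)"
  have "M_p p M \<subseteq> cball x1 B"
  proof
    fix x assume xM: "x \<in> M_p p M"
    show "x \<in> cball x1 B"
    proof (rule ccontr)
      assume "x \<notin> cball x1 B"
      then have RB: "dist x1 x > B" by simp
      define R where "R = dist x1 x"
      have R1: "R > r + 1" and R2: "R > 2 * c" using RB unfolding R_def B_def by auto
      have hle: "(R - c) - R * f n y \<le> dist x y powr p - dist x1 y powr p" for y
      proof (cases "real n < dist x1 y")
        case False
        then have fy: "f n y = 0" unfolding f_def by simp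
        have "R \<le> dist x y + dist x1 y" unfolding R_def by (metis dist_commute dist_triangle)
        then have ax: "dist x y \<ge> R - r" using False r_def by simp
        then have "1 \<le> dist x y" using R1 by simp
        then have "dist x y powr 1 \<le> dist x y powr p" using assms(1) by (intro powr_mono) auto
        then have a1: "dist x y \<le> dist x y powr p" by simp
        have "dist x1 y powr p \<le> r powr p" using False p0 r_def by (intro powr_mono2) auto
        then show ?thesis using fy a1 ax unfolding c_def by simp
      next
        case True
        then have fy: "f n y = p * dist x1 y powr q + 1" unfolding f_def by simp
        have t: "p * dist x1 y powr q * (dist x y - dist x1 y) \<le> dist x y powr p - dist x1 y powr p"
          unfolding q_def using assms(1) by (intro tangent_powr) auto
        have "dist x1 y \<le> dist x1 x + dist x y" by (rule dist_triangle)
        then have "- R \<le> dist x y - dist x1 y" unfolding R_def by simp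
        then have "p * dist x1 y powr q * (- R) \<le> p * dist x1 y powr q * (dist x y - dist x1 y)"
          using p0 by (intro mult_left_mono) auto
        then show ?thesis using t fy c0 by (simp add: algebra_simps)
      qed
      have "(\<integral>y. (R - c) - R * f n y \<partial>M) \<le> (\<integral>y. dist x y powr p - dist x1 y powr p \<partial>M)"
        using hle idf ifn by (intro integral_mono) auto
      moreover have "(\<integral>y. (R - c) - R * f n y \<partial>M) = (R - c) - R * integral\<^sup>L M (f n)"
        using ifn by (simp add: prob_space)
      moreover have "(\<integral>y. dist x y powr p - dist x1 y powr p \<partial>M) \<le> 0"
        using xM unfolding M_p_def W_p_def by auto
      moreover have "R * integral\<^sup>L M (f n) \<le> R * (1/4)"
        using fn R1 r0 by (intro mult_left_mono) auto
      ultimately show False using R2 c0 by linarith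
    qed
  qed
  then have "bounded (M_p p M)" using bounded_cball bounded_subset by blast
  with cl show ?thesis by simp
qed

end
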